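(* In the setting described in the context, let $i\in\mathcal V$ and let $z_{-i}=(z_j)_{j\ne i}\in[0,1]^{n-1}$ be such that $\mathcal S(z_{-i})=\{j\ne i: z_j=1\}\ne\emptyset$. Then: (i) the map $z_i\mapsto\upsilon_i(z_i,z_{-i})$ is constant on $[0,1)$; (ii) $\mathcal B_i(z_{-i})\in\{[0,1),\,[0,1],\,\{1\}\}$; (iii) if $\sigma_i^2\ge\sigma_j^2$ for every $j\in\mathcal S(z_{-i})$, then $\mathcal B_i(z_{-i})\in\{[0,1),[0,1]\}$; (iv) if $\sigma_i^2>\sigma_j^2$ for every $j\in\mathcal S(z_{-i})$, then $\mathcal B_i(z_{-i})=[0,1)$.
   Context: Let $n\ge2$ and $\mathcal V=\{1,\dots,n\}$. Let $P\in\mathbb{R}^{n\times n}$ be a row-stochastic, irreducible, aperiodic matrix (the graph on $\mathcal V$ with edge $(i,j)$ iff $P_{ij}>0$ is strongly connected with gcd of cycle lengths $1$). For $z\in[0,1]^n$, $W(z)=(I-[z])P+[z]$ ($[z]$ the diagonal matrix with diagonal $z$) and $H(z)=\lim_{t\to\infty}W(z)^t$ (the limit exists and is row-stochastic). Let $\sigma_1^2,\dots,\sigma_n^2>0$. Agent $i$'s cost is $\upsilon_i(z)=\sum_jH_{ij}(z)^2\sigma_j^2$, written $\upsilon_i(z_i,z_{-i})$, and her best response set is $\mathcal B_i(z_{-i})=\arg\min_{z_i\in[0,1]}\upsilon_i(z_i,z_{-i})$. *)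

theory Defs
  imports "HOL-Analysis.Analysis"
begin

text \<open>Vertices are 0,...,n-1 (the paper's 1,...,n shifted by one).
  n x n real matrices are represented as functions nat => nat => real,
  only entries with indices below n are meaningful.\<close>

definition mat_mult :: "nat \<Rightarrow> (nat \<Rightarrow> nat \<Rightarrow> real) \<Rightarrow> (nat \<Rightarrow> nat \<Rightarrow> real) \<Rightarrow> (nat \<Rightarrow> nat \<Rightarrow> real)" where
  "mat_mult n A B = (\<lambda>i j. \<Sum>k<n. A i k * B k j)"

definition id_mat :: "nat \<Rightarrow> nat \<Rightarrow> real" where
  "id_mat = (\<lambda>i j. if i = j then 1 else 0)"

primrec mat_pow :: "nat \<Rightarrow> (nat \<Rightarrow> nat \<Rightarrow> real) \<Rightarrow> nat \<Rightarrow> (nat \<Rightarrow> nat \<Rightarrow> real)" where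
  "mat_pow n A 0 = id_mat"
| "mat_pow n A (Suc t) = mat_mult n (mat_pow n A t) A"

definition row_stochastic :: "nat \<Rightarrow> (nat \<Rightarrow> nat \<Rightarrow> real) \<Rightarrow> bool" where
  "row_stochastic n P \<longleftrightarrow> (\<forall>i<n. \<forall>j<n. 0 \<le> P i j) \<and> (\<forall>i<n. (\<Sum>j<n. P i j) = 1)"

definition edges :: "nat \<Rightarrow> (nat \<Rightarrow> nat \<Rightarrow> real) \<Rightarrow> (nat \<times> nat) set" where
  "edges n P = {(i, j). i < n \<and> j < n \<and> 0 < P i j}"

definition strongly_connected :: "nat \<Rightarrow> (nat \<Rightarrow> nat \<Rightarrow> real) \<Rightarrow> bool" where
  "strongly_connected n P \<longleftrightarrow> (\<forall>i<n. \<forall>j<n. (i, j) \<in> (edges n P)\<^sup>*)"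

definition is_cycle :: "nat \<Rightarrow> (nat \<Rightarrow> nat \<Rightarrow> real) \<Rightarrow> nat list \<Rightarrow> bool" where
  "is_cycle n P vs \<longleftrightarrow> vs \<noteq> [] \<and> distinct vs \<and> set vs \<subseteq> {..<n} \<and>
     (\<forall>m<length vs. (vs ! m, vs ! ((m + 1) mod length vs)) \<in> edges n P)"

definition cycle_lengths :: "nat \<Rightarrow> (nat \<Rightarrow> nat \<Rightarrow> real) \<Rightarrow> nat set" where
  "cycle_lengths n P = {length vs | vs. is_cycle n P vs}"

definition irreducible_mat :: "nat \<Rightarrow> (nat \<Rightarrow> nat \<Rightarrow> real) \<Rightarrow> bool" where
  "irreducible_mat n P \<longleftrightarrow> strongly_connected n P"

definition aperiodic_mat :: "nat \<Rightarrow> (nat \<Rightarrow> nat \<Rightarrow> real) \<Rightarrow> bool" where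
  "aperiodic_mat n P \<longleftrightarrow> Gcd (cycle_lengths n P) = 1"

definition W :: "(nat \<Rightarrow> nat \<Rightarrow> real) \<Rightarrow> (nat \<Rightarrow> real) \<Rightarrow> (nat \<Rightarrow> nat \<Rightarrow> real)" where
  "W P z = (\<lambda>i j. (1 - z i) * P i j + (if i = j then z i else 0))"

definition H :: "nat \<Rightarrow> (nat \<Rightarrow> nat \<Rightarrow> real) \<Rightarrow> (nat \<Rightarrow> real) \<Rightarrow> (nat \<Rightarrow> nat \<Rightarrow> real)" where
  "H n P z = (\<lambda>i j. lim (\<lambda>t. mat_pow n (W P z) t i j))"

definition upsilon :: "nat \<Rightarrow> (nat \<Rightarrow> nat \<Rightarrow> real) \<Rightarrow> (nat \<Rightarrow> real) \<Rightarrow> nat \<Rightarrow> (nat \<Rightarrow> real) \<Rightarrow> real" where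
  "upsilon n P sigma2 i z = (\<Sum>j<n. (H n P z i j)\<^sup>2 * sigma2 j)"

text \<open>Best response of agent i to z_{-i}: the profile z with its i-th entry replaced
  (the value z i itself is irrelevant).\<close>
definition best_response :: "nat \<Rightarrow> (nat \<Rightarrow> nat \<Rightarrow> real) \<Rightarrow> (nat \<Rightarrow> real) \<Rightarrow> nat \<Rightarrow> (nat \<Rightarrow> real) \<Rightarrow> real set" where
  "best_response n P sigma2 i z =
     {x \<in> {0..1}. \<forall>y\<in>{0..1}. upsilon n P sigma2 i (z(i := x)) \<le> upsilon n P sigma2 i (z(i := y))}"

definition stubborn_set :: "nat \<Rightarrow> nat \<Rightarrow> (nat \<Rightarrow> real) \<Rightarrow> nat set" where
  "stubborn_set n i z = {j. j < n \<and> j \<noteq> i \<and> z j = 1}"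

end

theory Submission
  imports Defs "HOL-Analysis.Analysis"
begin


lemma delta_l: "(\<Sum>k<(n::nat). (if a = k then 1 else 0) * (f k::real)) = (if a < n then f a else 0)"
proof -
  have "(\<Sum>k<n. (if a = k then 1 else 0) * f k) = (\<Sum>k<n. if a = k then f k else 0)"
    by (intro sum.cong) auto
  then show ?thesis using sum.delta'[of "{..<n}" a f] by simp
qed

lemma delta_r: "(\<Sum>k<(n::nat). (f k::real) * (if k = a then 1 else 0)) = (if a < n then f a else 0)"
proof -
  have "(\<Sum>k<n. f k * (if k = a then 1 else 0)) = (\<Sum>k<n. if a = k then f k else 0)"
    by (intro sum.cong) auto
  then show ?thesis using sum.delta'[of "{..<n}" a f] by simp
qed

lemma stoch_W:
  assumes "row_stochastic n P" "\<forall>j<n. 0 \<le> z j \<and> z j \<le> 1"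
  shows "row_stochastic n (W P z)"
proof -
  have nn: "\<forall>i<n. \<forall>j<n. 0 \<le> W P z i j"
    using assms unfolding row_stochastic_def W_def by auto
  have "(\<Sum>j<n. W P z i j) = 1" if "i < n" for i
  proof -
    have "(\<Sum>j<n. W P z i j) = (1 - z i) * (\<Sum>j<n. P i j) + (\<Sum>j<n. (if i = j then z i else 0))"
      unfolding W_def by (simp add: sum.distrib sum_distrib_left)
    also have "\<dots> = 1" using assms that unfolding row_stochastic_def by simp
    finally show ?thesis .
  qed
  then show ?thesis using nn unfolding row_stochastic_def by auto
qed

lemma stoch_pow:
  assumes "row_stochastic n A"
  shows "row_stochastic n (mat_pow n A t)"
proof (induction t)
  case 0
  show ?case unfolding row_stochastic_def by (auto simp: id_mat_def)
next
  case (Suc t)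
  have h1: "\<forall>i<n. \<forall>j<n. 0 \<le> mat_pow n A t i j" using Suc.IH unfolding row_stochastic_def by blast
  have h2: "\<forall>i<n. \<forall>j<n. 0 \<le> A i j" using assms unfolding row_stochastic_def by blast
  have nn: "\<forall>i<n. \<forall>j<n. 0 \<le> mat_pow n A (Suc t) i j"
  proof (intro allI impI)
    fix i j assume ij: "i < n" "j < n"
    have "0 \<le> (\<Sum>k<n. mat_pow n A t i k * A k j)"
      by (rule sum_nonneg) (use h1 h2 ij in auto)
    then show "0 \<le> mat_pow n A (Suc t) i j" by (simp add: mat_mult_def)
  qed
  have "(\<Sum>j<n. mat_pow n A (Suc t) i j) = 1" if "i < n" for i
  proof -
    have "(\<Sum>j<n. mat_pow n A (Suc t) i j) = (\<Sum>k<n. mat_pow n A t i k * (\<Sum>j<n. A k j))"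
      apply (simp add: mat_mult_def sum_distrib_left)
      apply (rule sum.swap)
      done
    also have "\<dots> = (\<Sum>k<n. mat_pow n A t i k)"
      using assms unfolding row_stochastic_def by simp
    also have "\<dots> = 1" using Suc that unfolding row_stochastic_def by simp
    finally show ?thesis .
  qed
  then show ?case using nn unfolding row_stochastic_def by auto
qed

lemma pow_Suc_left:
  assumes "i < n" "j < n"
  shows "mat_pow n A (Suc t) i j = (\<Sum>l<n. A i l * mat_pow n A t l j)"
  using assms
proof (induction t arbitrary: j)
  case 0
  then show ?case by (simp add: mat_mult_def id_mat_def delta_l delta_r)
next
  case (Suc t)
  have "mat_pow n A (Suc (Suc t)) i j = (\<Sum>k<n. mat_pow n A (Suc t) i k * A k j)"
    by (simp add: mat_mult_def)
  also have "\<dots> = (\<Sum>k<n. (\<Sum>l<n. A i l * mat_pow n A t l k) * A k j)"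
    using Suc by (intro sum.cong) auto
  also have "\<dots> = (\<Sum>l<n. A i l * mat_pow n A (Suc t) l j)"
    apply (simp add: mat_mult_def sum_distrib_left sum_distrib_right mult.assoc)
    apply (rule sum.swap)
    done
  finally show ?case .
qed

lemma pow_add:
  assumes "j < n"
  shows "mat_pow n A (s + r) i j = (\<Sum>l<n. mat_pow n A s i l * mat_pow n A r l j)"
  using assms
proof (induction r arbitrary: j)
  case 0
  then show ?case by (simp add: id_mat_def delta_r)
next
  case (Suc r)
  have "mat_pow n A (s + Suc r) i j = (\<Sum>k<n. mat_pow n A (s + r) i k * A k j)"
    by (simp add: mat_mult_def)
  also have "\<dots> = (\<Sum>k<n. (\<Sum>l<n. mat_pow n A s i l * mat_pow n A r l k) * A k j)"
    using Suc by (intro sum.cong) auto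
  also have "\<dots> = (\<Sum>l<n. mat_pow n A s i l * mat_pow n A (Suc r) l j)"
    apply (simp add: mat_mult_def sum_distrib_left sum_distrib_right mult.assoc)
    apply (rule sum.swap)
    done
  finally show ?case .
qed

lemma absorb_W:
  assumes "z a = 1"
  shows "W P z a j = (if a = j then 1 else 0)"
  using assms unfolding W_def by auto

lemma absorb_pow:
  assumes "z a = 1" "a < n"
  shows "mat_pow n (W P z) t a j = (if a = j then 1 else 0)"
proof (induction t arbitrary: j)
  case 0
  then show ?case by (simp add: id_mat_def)
next
  case (Suc t)
  have "mat_pow n (W P z) (Suc t) a j = (\<Sum>k<n. (if a = k then 1 else 0) * W P z k j)"
    using Suc by (simp add: mat_mult_def)
  also have "\<dots> = W P z a j" using assms by (simp add: delta_l)
  also have "\<dots> = (if a = j then 1 else 0)" using assms(1) by (auto simp: W_def)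
  finally show ?case .
qed



lemma reach:
  assumes st: "row_stochastic n P" and sc: "strongly_connected n P"
    and zr: "\<forall>j<n. 0 \<le> z j \<and> z j \<le> 1" and a0: "a0 < n" "z a0 = 1" and k: "k < n"
  shows "\<exists>a t. a < n \<and> z a = 1 \<and> 0 < mat_pow n (W P z) t k a"
proof -
  have stW: "row_stochastic n (W P z)" using stoch_W st zr by blast
  have "(k, a0) \<in> (edges n P)\<^sup>*" using sc a0 k unfolding strongly_connected_def by auto
  then show ?thesis using k
  proof (induction rule: converse_rtrancl_induct)
    case base
    then show ?case using a0 by (intro exI[of _ a0] exI[of _ 0]) (auto simp: id_mat_def)
  next
    case (step y w)
    from step.hyps(1) have y: "y < n" "w < n" "0 < P y w" by (auto simp: edges_def)
    show ?case
    proof (cases "z y = 1")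
      case True
      then show ?thesis using y by (intro exI[of _ y] exI[of _ 0]) (auto simp: id_mat_def)
    next
      case False
      then have zy: "z y < 1" using zr y by force
      obtain a t where a: "a < n" "z a = 1" "0 < mat_pow n (W P z) t w a" using step.IH y by blast
      have "0 < (1 - z y) * P y w" using zy y by simp
      moreover have "0 \<le> (if y = w then z y else 0)" using zr y by auto
      ultimately have Wpos: "0 < W P z y w" unfolding W_def by linarith
      have nnW: "\<forall>l<n. 0 \<le> W P z y l" using stW y unfolding row_stochastic_def by auto
      have nnM: "\<forall>l<n. 0 \<le> mat_pow n (W P z) t l a"
        using stoch_pow[OF stW, of t] a unfolding row_stochastic_def by auto
      have "W P z y w * mat_pow n (W P z) t w a \<le> (\<Sum>l<n. W P z y l * mat_pow n (W P z) t l a)"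
        by (rule member_le_sum) (use y nnW nnM in auto)
      also have "\<dots> = mat_pow n (W P z) (Suc t) y a" using pow_Suc_left y a by simp
      finally have "0 < mat_pow n (W P z) (Suc t) y a"
        using Wpos a(3) by (smt (verit) mult_pos_pos)
      then show ?thesis using a by blast
    qed
  qed
qed

lemma mono_abs:
  assumes st: "row_stochastic n P"
    and zr: "\<forall>j<n. 0 \<le> z j \<and> z j \<le> 1" and a: "a < n" "z a = 1" and k: "k < n" and tt: "t \<le> t'"
  shows "mat_pow n (W P z) t k a \<le> mat_pow n (W P z) t' k a"
proof -
  have stW: "row_stochastic n (W P z)" using stoch_W st zr by blast
  show ?thesis
  proof (rule lift_Suc_mono_le[OF _ tt])
    fix s
    have nnW: "\<forall>l<n. 0 \<le> W P z l a" using stW a unfolding row_stochastic_def by auto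
    have nnM: "\<forall>l<n. 0 \<le> mat_pow n (W P z) s k l"
      using stoch_pow[OF stW, of s] k unfolding row_stochastic_def by auto
    have "mat_pow n (W P z) s k a * W P z a a \<le> (\<Sum>l<n. mat_pow n (W P z) s k l * W P z l a)"
      by (rule member_le_sum) (use a nnW nnM in auto)
    then show "mat_pow n (W P z) s k a \<le> mat_pow n (W P z) (Suc s) k a"
      using a by (simp add: mat_mult_def W_def)
  qed
qed

definition mass :: "nat \<Rightarrow> (nat \<Rightarrow> nat \<Rightarrow> real) \<Rightarrow> (nat \<Rightarrow> real) \<Rightarrow> nat \<Rightarrow> nat \<Rightarrow> real" where
  "mass n P z t k = (\<Sum>j<n. if z j = 1 then 0 else mat_pow n (W P z) t k j)"

lemma mass_bounds:
  assumes st: "row_stochastic n P" and zr: "\<forall>j<n. 0 \<le> z j \<and> z j \<le> 1" and k: "k < n"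
  shows "0 \<le> mass n P z t k \<and> mass n P z t k \<le> 1"
proof -
  have stW: "row_stochastic n (W P z)" using stoch_W st zr by blast
  have sM: "row_stochastic n (mat_pow n (W P z) t)" using stoch_pow[OF stW] by blast
  have "0 \<le> mass n P z t k" unfolding mass_def using sM k
    by (intro sum_nonneg) (auto simp: row_stochastic_def)
  moreover have "mass n P z t k \<le> (\<Sum>j<n. mat_pow n (W P z) t k j)" unfolding mass_def using sM k
    by (intro sum_mono) (auto simp: row_stochastic_def)
  ultimately show ?thesis using sM k by (auto simp: row_stochastic_def)
qed

lemma mass_abs:
  assumes "l < n" "z l = 1"
  shows "mass n P z t l = 0"
  unfolding mass_def using absorb_pow[of z l n P t] assms by (intro sum.neutral) auto

lemma mass_add:
  "mass n P z (s + r) k = (\<Sum>l<n. mat_pow n (W P z) s k l * mass n P z r l)"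
proof -
  have "mass n P z (s + r) k =
      (\<Sum>j<n. \<Sum>l<n. mat_pow n (W P z) s k l * (if z j = 1 then 0 else mat_pow n (W P z) r l j))"
    unfolding mass_def by (intro sum.cong refl) (auto simp: pow_add)
  also have "\<dots> = (\<Sum>l<n. mat_pow n (W P z) s k l * mass n P z r l)"
    unfolding mass_def
    apply (simp add: sum_distrib_left)
    apply (rule sum.swap)
    done
  finally show ?thesis .
qed



lemma mass_decay:
  assumes st: "row_stochastic n P" and sc: "strongly_connected n P"
    and zr: "\<forall>j<n. 0 \<le> z j \<and> z j \<le> 1" and a0: "a0 < n" "z a0 = 1" and k: "k < n"
  shows "(\<lambda>t. mass n P z t k) \<longlonglongrightarrow> 0"
proof -
  let ?M = "mat_pow n (W P z)"
  have stW: "row_stochastic n (W P z)" using stoch_W st zr by blast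
  have nnM: "\<And>t k l. k < n \<Longrightarrow> l < n \<Longrightarrow> 0 \<le> ?M t k l"
    using stoch_pow[OF stW] unfolding row_stochastic_def by blast
  have "\<forall>k. \<exists>a t. k < n \<longrightarrow> a < n \<and> z a = 1 \<and> 0 < ?M t k a"
    using reach[OF st sc zr a0] by blast
  then obtain fa where "\<forall>k. \<exists>t. k < n \<longrightarrow> fa k < n \<and> z (fa k) = 1 \<and> 0 < ?M t k (fa k)"
    by metis
  then obtain ft where f: "\<forall>k. k < n \<longrightarrow> fa k < n \<and> z (fa k) = 1 \<and> 0 < ?M (ft k) k (fa k)"
    by metis
  define N where "N = Max (ft ` {..<n})"
  have mN: "mass n P z N l < 1" if l: "l < n" for l
  proof -
    have le: "ft l \<le> N" unfolding N_def using l by (intro Max_ge) auto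
    have "0 < ?M (ft l) l (fa l)" using f l by blast
    also have "\<dots> \<le> ?M N l (fa l)" using mono_abs[OF st zr _ _ l le] f l by blast
    also have "\<dots> = (if z (fa l) = 1 then ?M N l (fa l) else 0)" using f l by simp
    also have "\<dots> \<le> (\<Sum>j<n. if z j = 1 then ?M N l j else 0)"
      by (rule member_le_sum[where i="fa l"]) (use f l nnM in auto)
    finally have pos: "0 < (\<Sum>j<n. if z j = 1 then ?M N l j else 0)" .
    have "1 = (\<Sum>j<n. ?M N l j)"
      using stoch_pow[OF stW, of N] l unfolding row_stochastic_def by auto
    also have "\<dots> = (\<Sum>j<n. (if z j = 1 then 0 else ?M N l j) + (if z j = 1 then ?M N l j else 0))"
      by (intro sum.cong) auto
    also have "\<dots> = mass n P z N l + (\<Sum>j<n. if z j = 1 then ?M N l j else 0)"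
      unfolding mass_def by (simp add: sum.distrib)
    finally show ?thesis using pos by linarith
  qed
  define c where "c = Max (mass n P z N ` {..<n})"
  have cin: "c \<in> mass n P z N ` {..<n}" unfolding c_def using k by (intro Max_in) auto
  then have c1: "c < 1" using mN by auto
  have mc: "mass n P z N l \<le> c" if "l < n" for l unfolding c_def using that by (intro Max_ge) auto
  have c0: "0 \<le> c" using mc[OF k] mass_bounds[OF st zr k, of N] by linarith
  have step: "mass n P z (s + N) l \<le> c * mass n P z s l" if l: "l < n" for s l
  proof -
    have "mass n P z (s + N) l = (\<Sum>m<n. ?M s l m * mass n P z N m)" by (rule mass_add)
    also have "\<dots> \<le> (\<Sum>m<n. c * (if z m = 1 then 0 else ?M s l m))"
    proof (intro sum_mono)
      fix m assume "m \<in> {..<n}"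
      then have m: "m < n" by simp
      show "?M s l m * mass n P z N m \<le> c * (if z m = 1 then 0 else ?M s l m)"
      proof (cases "z m = 1")
        case True then show ?thesis using mass_abs[of m n z P, OF m True] by simp
      next
        case False then show ?thesis using mc[OF m] nnM[OF l m, of s]
          by (simp add: mult.commute mult_right_mono)
      qed
    qed
    also have "\<dots> = c * mass n P z s l" unfolding mass_def by (simp add: sum_distrib_left)
    finally show ?thesis .
  qed
  have mono: "mass n P z (s + r) l \<le> mass n P z s l" if l: "l < n" for s r l
  proof -
    have "mass n P z (s + r) l = (\<Sum>m<n. ?M s l m * mass n P z r m)" by (rule mass_add)
    also have "\<dots> \<le> (\<Sum>m<n. (if z m = 1 then 0 else ?M s l m))"
    proof (intro sum_mono)
      fix m assume "m \<in> {..<n}"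
      then have m: "m < n" by simp
      show "?M s l m * mass n P z r m \<le> (if z m = 1 then 0 else ?M s l m)"
      proof (cases "z m = 1")
        case True then show ?thesis using mass_abs[of m n z P, OF m True] by simp
      next
        case False then show ?thesis using mass_bounds[OF st zr m, of r] nnM[OF l m, of s]
          by (simp add: mult_left_le)
      qed
    qed
    also have "\<dots> = mass n P z s l" unfolding mass_def by simp
    finally show ?thesis .
  qed
  have geo: "mass n P z (q * N) l \<le> c ^ q" if l: "l < n" for q l
  proof (induction q)
    case 0 then show ?case using mass_bounds[OF st zr l] by simp
  next
    case (Suc q)
    have "mass n P z (Suc q * N) l = mass n P z (q * N + N) l" by (simp add: add.commute)
    also have "\<dots> \<le> c * mass n P z (q * N) l" using step[OF l] by blast
    also have "\<dots> \<le> c * c ^ q" using Suc c0 by (simp add: mult_left_mono)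
    finally show ?case by simp
  qed
  show ?thesis
  proof (rule LIMSEQ_I)
    fix r :: real assume r: "0 < r"
    obtain Q where Q: "c ^ Q < r" using real_arch_pow_inv[OF r c1] by blast
    show "\<exists>no. \<forall>t\<ge>no. norm (mass n P z t k - 0) < r"
    proof (intro exI allI impI)
      fix t assume t: "Q * N \<le> t"
      have "mass n P z t k = mass n P z (Q * N + (t - Q * N)) k" using t by simp
      also have "\<dots> \<le> mass n P z (Q * N) k" using mono[OF k] by blast
      also have "\<dots> \<le> c ^ Q" using geo[OF k] by blast
      finally show "norm (mass n P z t k - 0) < r" using Q mass_bounds[OF st zr k, of t] by simp
    qed
  qed
qed



definition good :: "nat \<Rightarrow> (nat \<Rightarrow> nat \<Rightarrow> real) \<Rightarrow> (nat \<Rightarrow> real) \<Rightarrow> bool" where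
  "good n P z \<longleftrightarrow> row_stochastic n P \<and> strongly_connected n P \<and>
     (\<forall>j<n. 0 \<le> z j \<and> z j \<le> 1) \<and> (\<exists>a<n. z a = 1)"

lemma good_M_nonneg:
  assumes "good n P z" "k < n" "j < n"
  shows "0 \<le> mat_pow n (W P z) t k j"
proof -
  have "row_stochastic n (W P z)" using stoch_W assms(1) unfolding good_def by blast
  then show ?thesis using stoch_pow assms(2,3) unfolding row_stochastic_def by blast
qed

lemma good_M_le1:
  assumes "good n P z" "k < n" "j < n"
  shows "mat_pow n (W P z) t k j \<le> 1"
proof -
  have "row_stochastic n (W P z)" using stoch_W assms(1) unfolding good_def by blast
  then have sM: "row_stochastic n (mat_pow n (W P z) t)" using stoch_pow by blast
  have "mat_pow n (W P z) t k j \<le> (\<Sum>l<n. mat_pow n (W P z) t k l)"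
    by (rule member_le_sum) (use assms sM in \<open>auto simp: row_stochastic_def\<close>)
  also have "\<dots> = 1" using sM assms unfolding row_stochastic_def by blast
  finally show ?thesis .
qed

lemma entry_decay:
  assumes g: "good n P z" and k: "k < n" and j: "j < n" and zj: "z j \<noteq> 1"
  shows "(\<lambda>t. mat_pow n (W P z) t k j) \<longlonglongrightarrow> 0"
proof (rule tendsto_sandwich[of "\<lambda>_. 0" _ _ "\<lambda>t. mass n P z t k"])
  show "\<forall>\<^sub>F t in sequentially. 0 \<le> mat_pow n (W P z) t k j"
    using good_M_nonneg[OF g k j] by simp
  have "mat_pow n (W P z) t k j \<le> mass n P z t k" for t
  proof -
    have "mat_pow n (W P z) t k j = (if z j = 1 then 0 else mat_pow n (W P z) t k j)" using zj by simp
    also have "\<dots> \<le> mass n P z t k" unfolding mass_def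
      by (rule member_le_sum) (use j good_M_nonneg[OF g k] in auto)
    finally show ?thesis .
  qed
  then show "\<forall>\<^sub>F t in sequentially. mat_pow n (W P z) t k j \<le> mass n P z t k" by simp
  show "(\<lambda>_. 0) \<longlonglongrightarrow> (0::real)" by simp
  obtain a where "a < n" "z a = 1" using g unfolding good_def by blast
  then show "(\<lambda>t. mass n P z t k) \<longlonglongrightarrow> 0"
    using mass_decay[of n P z a k] g k unfolding good_def irreducible_mat_def by blast
qed

lemma H_conv:
  assumes g: "good n P z" and k: "k < n" and j: "j < n"
  shows "(\<lambda>t. mat_pow n (W P z) t k j) \<longlonglongrightarrow> H n P z k j"
proof -
  have "convergent (\<lambda>t. mat_pow n (W P z) t k j)"
  proof (cases "z j = 1")
    case True
    have "incseq (\<lambda>t. mat_pow n (W P z) t k j)"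
      unfolding incseq_def using mono_abs[of n P z j k] g True j k unfolding good_def by blast
    moreover have "bdd_above (range (\<lambda>t. mat_pow n (W P z) t k j))"
      using good_M_le1[OF g k j] by (intro bdd_aboveI[of _ 1]) auto
    ultimately show ?thesis using LIMSEQ_incseq_SUP unfolding convergent_def by blast
  next
    case False
    then show ?thesis using entry_decay[OF g k j] unfolding convergent_def by blast
  qed
  then show ?thesis unfolding H_def by (simp add: convergent_LIMSEQ_iff)
qed

lemma H_zero:
  assumes g: "good n P z" and k: "k < n" and j: "j < n" and zj: "z j \<noteq> 1"
  shows "H n P z k j = 0"
  using LIMSEQ_unique[OF H_conv[OF g k j] entry_decay[OF g k j zj]] .

lemma H_nonneg:
  assumes g: "good n P z" and k: "k < n" and j: "j < n"
  shows "0 \<le> H n P z k j"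
  by (rule LIMSEQ_le_const[OF H_conv[OF g k j]]) (use good_M_nonneg[OF g k j] in auto)

lemma H_rowsum:
  assumes g: "good n P z" and k: "k < n"
  shows "(\<Sum>j<n. H n P z k j) = 1"
proof -
  have "(\<lambda>t. \<Sum>j<n. mat_pow n (W P z) t k j) \<longlonglongrightarrow> (\<Sum>j<n. H n P z k j)"
    by (rule tendsto_sum) (use H_conv[OF g k] in auto)
  moreover have "(\<lambda>t. \<Sum>j<n. mat_pow n (W P z) t k j) = (\<lambda>t. 1)"
  proof
    fix t
    have "row_stochastic n (W P z)" using stoch_W g unfolding good_def by blast
    then show "(\<Sum>j<n. mat_pow n (W P z) t k j) = 1"
      using stoch_pow k unfolding row_stochastic_def by blast
  qed
  ultimately show ?thesis using LIMSEQ_unique tendsto_const by metis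
qed

lemma H_abs:
  assumes g: "good n P z" and a: "a < n" "z a = 1" and j: "j < n"
  shows "H n P z a j = (if a = j then 1 else 0)"
proof -
  have "(\<lambda>t. mat_pow n (W P z) t a j) = (\<lambda>t. if a = j then 1 else 0)"
    using absorb_pow[of z a n P] a by auto
  then show ?thesis using H_conv[OF g a(1) j] LIMSEQ_unique tendsto_const by metis
qed

lemma H_fix:
  assumes g: "good n P z" and k: "k < n" and j: "j < n"
  shows "H n P z k j = (\<Sum>l<n. W P z k l * H n P z l j)"
proof -
  have "(\<lambda>t. mat_pow n (W P z) (Suc t) k j) \<longlonglongrightarrow> H n P z k j"
    using LIMSEQ_Suc[OF H_conv[OF g k j]] .
  moreover have "(\<lambda>t. mat_pow n (W P z) (Suc t) k j) = (\<lambda>t. \<Sum>l<n. W P z k l * mat_pow n (W P z) t l j)"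
    using pow_Suc_left[OF k j] by auto
  moreover have "(\<lambda>t. \<Sum>l<n. W P z k l * mat_pow n (W P z) t l j) \<longlonglongrightarrow> (\<Sum>l<n. W P z k l * H n P z l j)"
    by (intro tendsto_sum tendsto_mult_left) (use H_conv[OF g _ j] in auto)
  ultimately show ?thesis using LIMSEQ_unique by metis
qed



lemma H_indep:
  assumes g0: "good n P (z(i := 0))" and gx: "good n P (z(i := x))" and x: "x < 1"
    and i: "i < n" and k: "k < n" and j: "j < n"
  shows "H n P (z(i := x)) k j = H n P (z(i := 0)) k j"
proof -
  let ?z0 = "z(i := 0)" and ?zx = "z(i := x)"
  let ?H0 = "H n P ?z0" and ?Hx = "H n P ?zx"
  let ?Mx = "mat_pow n (W P ?zx)"
  have WH: "(\<Sum>l<n. W P ?zx m l * ?H0 l j) = ?H0 m j" if m: "m < n" for m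
  proof (cases "m = i")
    case False
    then have "\<And>l. W P ?zx m l = W P ?z0 m l" unfolding W_def by simp
    then show ?thesis using H_fix[OF g0 m j] by simp
  next
    case True
    have w1: "\<And>l. W P ?zx i l = (1 - x) * P i l + (if i = l then x else 0)" by (simp add: W_def)
    have w0: "\<And>l. W P ?z0 i l = P i l" by (simp add: W_def)
    have "(\<Sum>l<n. W P ?zx m l * ?H0 l j)
        = (\<Sum>l<n. (1 - x) * (P i l * ?H0 l j) + (if i = l then 1 else 0) * (x * ?H0 l j))"
      unfolding True w1 by (intro sum.cong refl) (simp add: algebra_simps)
    also have "\<dots> = (1 - x) * (\<Sum>l<n. P i l * ?H0 l j) + (\<Sum>l<n. (if i = l then 1 else 0) * (x * ?H0 l j))"
      by (simp add: sum.distrib sum_distrib_left)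
    also have "\<dots> = (1 - x) * ?H0 i j + x * ?H0 i j"
      using H_fix[OF g0 i j] i delta_l[where n=n and a=i and f="\<lambda>l. x * ?H0 l j"] by (simp add: w0)
    also have "\<dots> = ?H0 m j" using True by (simp add: algebra_simps)
    finally show ?thesis .
  qed
  have G: "(\<Sum>l<n. ?Mx t k' l * ?H0 l j) = ?H0 k' j" if k': "k' < n" for t k'
    using k'
  proof (induction t arbitrary: k')
    case 0
    have "(\<Sum>l<n. ?Mx 0 k' l * ?H0 l j) = (\<Sum>l<n. (if k' = l then 1 else 0) * ?H0 l j)"
      by (intro sum.cong refl) (simp add: id_mat_def)
    also have "\<dots> = ?H0 k' j" using delta_l[where n=n and a=k' and f="\<lambda>l. ?H0 l j"] 0 by presburger
    finally show ?case .
  next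
    case (Suc t)
    have "(\<Sum>l<n. ?Mx (Suc t) k' l * ?H0 l j)
        = (\<Sum>l<n. \<Sum>m<n. ?Mx t k' m * (W P ?zx m l * ?H0 l j))"
      by (simp add: mat_mult_def sum_distrib_right mult.assoc)
    also have "\<dots> = (\<Sum>m<n. \<Sum>l<n. ?Mx t k' m * (W P ?zx m l * ?H0 l j))"
      by (rule sum.swap)
    also have "\<dots> = (\<Sum>m<n. ?Mx t k' m * ?H0 m j)"
      by (intro sum.cong refl) (simp add: sum_distrib_left[symmetric] WH)
    also have "\<dots> = ?H0 k' j" using Suc by blast
    finally show ?case .
  qed
  have "(\<lambda>t. \<Sum>l<n. ?Mx t k l * ?H0 l j) \<longlonglongrightarrow> (\<Sum>l<n. ?Hx k l * ?H0 l j)"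
    by (intro tendsto_sum tendsto_mult_right) (use H_conv[OF gx k] in auto)
  moreover have "(\<lambda>t. \<Sum>l<n. ?Mx t k l * ?H0 l j) = (\<lambda>t. ?H0 k j)" using G[OF k] by auto
  ultimately have e: "?H0 k j = (\<Sum>l<n. ?Hx k l * ?H0 l j)" using LIMSEQ_unique tendsto_const by metis
  also have "\<dots> = (\<Sum>l<n. ?Hx k l * (if l = j then 1 else 0))"
  proof (intro sum.cong refl)
    fix l assume "l \<in> {..<n}"
    then have l: "l < n" by simp
    show "?Hx k l * ?H0 l j = ?Hx k l * (if l = j then 1 else 0)"
    proof (cases "?z0 l = 1")
      case True
      have "?H0 l j = (if l = j then 1 else 0)" by (rule H_abs[OF g0 l True j])
      then show ?thesis by (simp only:)
    next
      case False
      then have "?zx l \<noteq> 1" using x by (cases "l = i") auto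
      then show ?thesis using H_zero[OF gx k l] by simp
    qed
  qed
  also have "\<dots> = ?Hx k j" using delta_r[where n=n and a=j and f="\<lambda>l. ?Hx k l"] j by simp
  finally show ?thesis by simp
qed

lemma br_shape:
  fixes g :: "real \<Rightarrow> real"
  assumes c: "\<forall>x\<in>{0..<1}. g x = c" and d: "g 1 = d"
  shows "{x\<in>{0..1}. \<forall>y\<in>{0..1}. g x \<le> g y} = (if c < d then {0..<1} else if c = d then {0..1} else {1})"
proof -
  have gx: "g x = (if x = 1 then d else c)" if "x \<in> {0..1}" for x
    using that c d by auto
  have key: "(\<forall>y\<in>{0..1}. g x \<le> g y) \<longleftrightarrow> (g x \<le> c \<and> g x \<le> d)" if "x \<in> {0..1}" for x
  proof
    assume "\<forall>y\<in>{0..1}. g x \<le> g y"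
    then have "g x \<le> g 0" "g x \<le> g 1" by auto
    then show "g x \<le> c \<and> g x \<le> d" using c d by auto
  next
    assume "g x \<le> c \<and> g x \<le> d"
    then show "\<forall>y\<in>{0..1}. g x \<le> g y" using gx by auto
  qed
  have "{x\<in>{0..1}. \<forall>y\<in>{0..1}. g x \<le> g y} = {x\<in>{0..1}. (if x = 1 then d else c) \<le> c \<and> (if x = 1 then d else c) \<le> d}"
  proof (intro Collect_cong)
    fix x
    show "(x \<in> {0..1} \<and> (\<forall>y\<in>{0..1}. g x \<le> g y)) \<longleftrightarrow>
        (x \<in> {0..1} \<and> (if x = 1 then d else c) \<le> c \<and> (if x = 1 then d else c) \<le> d)"
    proof (cases "x \<in> {0..1}")
      case True then show ?thesis using key[OF True] gx[OF True] by simp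
    next
      case False then show ?thesis by blast
    qed
  qed
  also have "\<dots> = (if c < d then {0..<1} else if c = d then {0..1} else {1})"
  proof (cases "c < d")
    case True then show ?thesis by auto
  next
    case False
    show ?thesis
    proof (cases "c = d")
      case True then show ?thesis using False by auto
    next
      case ne: False
      have h1: "{x\<in>{0..1}. (if x = 1 then d else c) \<le> c \<and> (if x = 1 then d else c) \<le> d} = {1::real}"
        using False ne by (auto split: if_splits)
      have h2: "(if c < d then {0..<1} else if c = d then {0..1} else {1}) = {1::real}"
        using False ne by simp
      show ?thesis by (rule trans[OF h1 h2[symmetric]])
    qed
  qed
  finally show ?thesis .
qed



theorem proposition4:
  fixes n :: nat and P :: "nat \<Rightarrow> nat \<Rightarrow> real" and sigma2 :: "nat \<Rightarrow> real"
    and z :: "nat \<Rightarrow> real" and i :: nat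
  assumes n2: "2 \<le> n"
    and stoch: "row_stochastic n P"
    and irred: "irreducible_mat n P"
    and aper: "aperiodic_mat n P"
    and sigma_pos: "\<forall>j<n. 0 < sigma2 j"
    and i_in: "i < n"
    and z_range: "\<forall>j<n. j \<noteq> i \<longrightarrow> z j \<in> {0..1}"
    and S_ne: "stubborn_set n i z \<noteq> {}"
  shows "(\<forall>x\<in>{0..<1}. \<forall>y\<in>{0..<1}.
            upsilon n P sigma2 i (z(i := x)) = upsilon n P sigma2 i (z(i := y)))
       \<and> best_response n P sigma2 i z \<in> {{0..<1}, {0..1}, {1}}
       \<and> ((\<forall>j\<in>stubborn_set n i z. sigma2 j \<le> sigma2 i) \<longrightarrow>
            best_response n P sigma2 i z \<in> {{0..<1}, {0..1}})
       \<and> ((\<forall>j\<in>stubborn_set n i z. sigma2 j < sigma2 i) \<longrightarrow>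
            best_response n P sigma2 i z = {0..<1})"
proof -
  obtain s where s: "s < n" "s \<noteq> i" "z s = 1" using S_ne unfolding stubborn_set_def by blast
  have sc: "strongly_connected n P" using irred unfolding irreducible_mat_def .
  have goodx: "good n P (z(i := x))" if "x \<in> {0..1}" for x
    unfolding good_def using stoch sc z_range that s by auto
  have g0: "good n P (z(i := 0))" using goodx by simp
  let ?H0 = "H n P (z(i := 0))"
  let ?f = "\<lambda>x. upsilon n P sigma2 i (z(i := x))"
  define c where "c = upsilon n P sigma2 i (z(i := 0))"
  have fc: "\<forall>x\<in>{0..<1}. ?f x = c"
  proof
    fix x :: real assume x: "x \<in> {0..<1}"
    have gx: "good n P (z(i := x))" using goodx x by simp
    show "?f x = c" unfolding c_def upsilon_def
      using H_indep[OF g0 gx _ i_in i_in] x by (intro sum.cong refl) auto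
  qed
  have f1: "?f 1 = sigma2 i"
  proof -
    have "H n P (z(i := 1)) i j = (if i = j then 1 else 0)" for j
    proof -
      have "(\<lambda>t. mat_pow n (W P (z(i := 1))) t i j) = (\<lambda>t. if i = j then 1 else 0)"
        using absorb_pow[of "z(i := 1)" i n P] i_in by auto
      then show ?thesis unfolding H_def by (simp add: limI)
    qed
    then have "?f 1 = (\<Sum>j<n. (if i = j then 1 else 0) * sigma2 j)"
      unfolding upsilon_def by (intro sum.cong refl) auto
    also have "\<dots> = sigma2 i" using delta_l[where n=n and a=i and f=sigma2] i_in by simp
    finally show ?thesis .
  qed
  have br: "best_response n P sigma2 i z =
      (if c < sigma2 i then {0..<1} else if c = sigma2 i then {0..1} else {1})"
    unfolding best_response_def using br_shape[of ?f c "sigma2 i", OF fc f1] .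
  have h_nn: "\<And>j. j < n \<Longrightarrow> 0 \<le> ?H0 i j" using H_nonneg[OF g0 i_in] by blast
  have h_sum: "(\<Sum>j<n. ?H0 i j) = 1" using H_rowsum[OF g0 i_in] .
  have h_le1: "\<And>j. j < n \<Longrightarrow> ?H0 i j \<le> 1"
  proof -
    fix j assume j: "j < n"
    have "?H0 i j \<le> (\<Sum>j<n. ?H0 i j)" by (rule member_le_sum) (use j h_nn in auto)
    then show "?H0 i j \<le> 1" using h_sum by simp
  qed
  have h_supp: "\<And>j. j < n \<Longrightarrow> ?H0 i j \<noteq> 0 \<Longrightarrow> j \<in> stubborn_set n i z"
  proof -
    fix j assume j: "j < n" and ne: "?H0 i j \<noteq> 0"
    have "(z(i := 0)) j = 1" using H_zero[OF g0 i_in j] ne by blast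
    then show "j \<in> stubborn_set n i z" unfolding stubborn_set_def using j by (cases "j = i") auto
  qed
  have c_def2: "c = (\<Sum>j<n. (?H0 i j)\<^sup>2 * sigma2 j)" unfolding c_def upsilon_def ..
  have sumi: "(\<Sum>j<n. ?H0 i j * sigma2 i) = sigma2 i" using h_sum by (simp add: sum_distrib_right[symmetric])
  have term_le: "(?H0 i j)\<^sup>2 * sigma2 j \<le> ?H0 i j * sigma2 j" if j: "j < n" for j
  proof -
    have "(?H0 i j)\<^sup>2 \<le> ?H0 i j" using h_nn[OF j] h_le1[OF j] by (simp add: power2_eq_square mult_left_le)
    then show ?thesis using sigma_pos j by (simp add: mult_right_mono)
  qed
  have A: "c \<le> sigma2 i" if hyp: "\<forall>j\<in>stubborn_set n i z. sigma2 j \<le> sigma2 i"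
  proof -
    have "c \<le> (\<Sum>j<n. ?H0 i j * sigma2 i)" unfolding c_def2
    proof (intro sum_mono)
      fix j assume "j \<in> {..<n}"
      then have j: "j < n" by simp
      show "(?H0 i j)\<^sup>2 * sigma2 j \<le> ?H0 i j * sigma2 i"
      proof (cases "?H0 i j = 0")
        case True then show ?thesis by simp
      next
        case False
        then have "sigma2 j \<le> sigma2 i" using hyp h_supp[OF j] by blast
        then have "?H0 i j * sigma2 j \<le> ?H0 i j * sigma2 i" using h_nn[OF j] by (simp add: mult_left_mono)
        then show ?thesis using term_le[OF j] by linarith
      qed
    qed
    then show ?thesis using sumi by simp
  qed
  have B: "c < sigma2 i" if hyp: "\<forall>j\<in>stubborn_set n i z. sigma2 j < sigma2 i"
  proof -
    obtain j0 where j0: "j0 < n" "?H0 i j0 \<noteq> 0"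
    proof (rule ccontr)
      assume "\<not> thesis"
      then have "\<forall>j<n. ?H0 i j = 0" using that by blast
      then have "(\<Sum>j<n. ?H0 i j) = 0" by simp
      then show False using h_sum by simp
    qed
    have "c < (\<Sum>j<n. ?H0 i j * sigma2 i)" unfolding c_def2
    proof (rule sum_strict_mono_ex1)
      show "finite {..<n}" by simp
      show "\<forall>j\<in>{..<n}. (?H0 i j)\<^sup>2 * sigma2 j \<le> ?H0 i j * sigma2 i"
      proof
        fix j assume "j \<in> {..<n}"
        then have j: "j < n" by simp
        show "(?H0 i j)\<^sup>2 * sigma2 j \<le> ?H0 i j * sigma2 i"
        proof (cases "?H0 i j = 0")
          case True then show ?thesis by simp
        next
          case False
          then have "sigma2 j \<le> sigma2 i" using hyp h_supp[OF j] by force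
          then have "?H0 i j * sigma2 j \<le> ?H0 i j * sigma2 i" using h_nn[OF j] by (simp add: mult_left_mono)
          then show ?thesis using term_le[OF j] by linarith
        qed
      qed
      have pos: "0 < ?H0 i j0" using h_nn[OF j0(1)] j0(2) by linarith
      have "sigma2 j0 < sigma2 i" using hyp h_supp[OF j0] by blast
      then have "?H0 i j0 * sigma2 j0 < ?H0 i j0 * sigma2 i" using pos by simp
      then show "\<exists>j\<in>{..<n}. (?H0 i j)\<^sup>2 * sigma2 j < ?H0 i j * sigma2 i"
        using term_le[OF j0(1)] j0(1) by (intro bexI[of _ j0]) auto
    qed
    then show ?thesis using sumi by simp
  qed
  show ?thesis
  proof (intro conjI impI)
    show "\<forall>x\<in>{0..<1}. \<forall>y\<in>{0..<1}. ?f x = ?f y" using fc by simp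
    show "best_response n P sigma2 i z \<in> {{0..<1}, {0..1}, {1}}" unfolding br by simp
    show "best_response n P sigma2 i z \<in> {{0..<1}, {0..1}}"
      if "\<forall>j\<in>stubborn_set n i z. sigma2 j \<le> sigma2 i" using A[OF that] unfolding br by auto
    show "best_response n P sigma2 i z = {0..<1}"
      if "\<forall>j\<in>stubborn_set n i z. sigma2 j < sigma2 i" using B[OF that] unfolding br by auto
  qed
qed

end
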